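(* Let $e\geq 2$, $N=\langle\sigma\rangle$ cyclic of order $2^e$, and let $G$ be a non-regular transitive subgroup of $\mathrm{Hol}(N)$. Then: (a) the centre $Z(G)$ contains the element $\sigma^{2^{e-1}}$ of order $2$ and is cyclic; (b) if $G$ has no element of order $2^e$, then $Z(G)$ contains the element $[\sigma^{2^{e-2}},\varphi_{1+2^{e-1}}]$, which has order $4$.
   Context: For an odd integer $a$, $\varphi_a\in\mathrm{Aut}(N)$ is $\sigma\mapsto\sigma^a$. Elements of $\mathrm{Hol}(N)=N\rtimes\mathrm{Aut}(N)$ are written $[\sigma^u,\varphi_a]$ with $[\sigma^u,\varphi_a][\sigma^v,\varphi_b]=[\sigma^{u+va},\varphi_{ab}]$, and $\sigma^u$ denotes $[\sigma^u,\varphi_1]$. $\mathrm{Hol}(N)$ acts on $N$ by $[\sigma^u,\varphi_a]\cdot\sigma^v=\sigma^{u+av}$; a subgroup is transitive if it acts transitively on $N$, and regular if it is transitive with trivial stabiliser $\mathrm{Stab}(1_N)=G\cap\mathrm{Aut}(N)$. *)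

theory Defs
  imports "HOL-Algebra.Algebra"
begin

text \<open>The holomorph Hol(N) of N = <sigma> cyclic of order 2^e.  The element
  [sigma^u, phi_a] (u mod 2^e, a odd mod 2^e) is encoded as the pair (u, a)
  with 0 <= u < 2^e and 0 <= a < 2^e, a odd.\<close>

definition Hol :: "nat \<Rightarrow> (nat \<times> nat) monoid" where
  "Hol e = \<lparr> carrier = {(u, a). u < 2^e \<and> a < 2^e \<and> odd a},
             monoid.mult = (\<lambda>(u, a) (v, b). ((u + v * a) mod 2^e, (a * b) mod 2^e)),
             one = (0, 1 mod 2^e) \<rparr>"

definition hol_act :: "nat \<Rightarrow> nat \<times> nat \<Rightarrow> nat \<Rightarrow> nat" where
  "hol_act e g v = (fst g + snd g * v) mod 2^e"

definition transitive_sub :: "nat \<Rightarrow> (nat \<times> nat) set \<Rightarrow> bool" where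
  "transitive_sub e G \<longleftrightarrow> (\<forall>v < 2^e. \<forall>w < 2^e. \<exists>g \<in> G. hol_act e g v = w)"

text \<open>Stabiliser of 1_N (= sigma^0), i.e. G \<inter> Aut(N).\<close>
definition stab1 :: "nat \<Rightarrow> (nat \<times> nat) set \<Rightarrow> (nat \<times> nat) set" where
  "stab1 e G = {g \<in> G. hol_act e g 0 = 0}"

definition regular_sub :: "nat \<Rightarrow> (nat \<times> nat) set \<Rightarrow> bool" where
  "regular_sub e G \<longleftrightarrow> transitive_sub e G \<and> stab1 e G = {\<one>\<^bsub>Hol e\<^esub>}"

definition centre :: "('a, 'b) monoid_scheme \<Rightarrow> 'a set" where
  "centre G = {z \<in> carrier G. \<forall>g \<in> carrier G. z \<otimes>\<^bsub>G\<^esub> g = g \<otimes>\<^bsub>G\<^esub> z}"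

end

theory Submission
  imports Defs
begin


lemma Hol_carrier: "carrier (Hol e) = {(u, a). u < 2^e \<and> a < 2^e \<and> odd a}"
  by (simp add: Hol_def)
lemma Hol_mult: "(u,a) \<otimes>\<^bsub>Hol e\<^esub> (v,b) = ((u + v*a) mod 2^e, (a*b) mod 2^e)"
  by (simp add: Hol_def)
lemma Hol_one: "\<one>\<^bsub>Hol e\<^esub> = (0, 1 mod 2^e)"
  by (simp add: Hol_def)

lemma pow_gt1: "1 \<le> e \<Longrightarrow> (1::nat) < 2^e"
  using one_less_power[of "2::nat" e] by simp

lemma even_mod_pow2: assumes "1 \<le> e" shows "even ((x::nat) mod 2^e) \<longleftrightarrow> even x"
proof -
  have "(2::nat) dvd 2^e" using assms by (simp add: dvd_power)
  thus ?thesis by (rule dvd_mod_iff)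
qed

lemma odd_inverse:
  fixes a e :: nat
  assumes "odd a" "e \<ge> 1"
  shows "\<exists>b. b < 2^e \<and> odd b \<and> (a * b) mod 2^e = 1"
proof -
  have a0: "a \<noteq> 0" using assms by (metis even_zero)
  have "coprime a (2^e)" using assms by simp
  hence g: "gcd a (2^e) = 1" by (simp add: coprime_iff_gcd_eq_1)
  obtain x y where xy: "a * x = 2^e * y + gcd a (2^e)" using bezout_nat[OF a0] by blast
  hence xy': "a * x = 2^e * y + 1" using g by simp
  have M: "(2::nat)^e > 1" using assms pow_gt1 by simp
  have "(a * (x mod 2^e)) mod 2^e = (a*x) mod 2^e" by (simp add: mod_mult_right_eq)
  also have "\<dots> = (1 + y * 2^e) mod 2^e" using xy' by (simp add: mult.commute[of y])
  also have "\<dots> = 1 mod 2^e" by (rule mod_mult_self1)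
  also have "\<dots> = 1" using M by (rule mod_less)
  finally have 1: "(a * (x mod 2^e)) mod 2^e = 1" .
  have "odd (x mod 2^e)"
  proof
    assume "even (x mod 2^e)"
    hence "even (a * (x mod 2^e))" by simp
    hence "even ((a * (x mod 2^e)) mod 2^e)" using assms(2)
      by (simp add: even_mod_pow2) 
    thus False using 1 by simp
  qed
  thus ?thesis using 1 by (intro exI[of _ "x mod 2^e"]) auto
qed

lemma mm1: "(u + a * (s mod M)) mod M = (u + a*s) mod (M::nat)"
proof -
  have "(u + a * (s mod M)) mod M = (u + (a * (s mod M)) mod M) mod M" by (rule mod_add_right_eq[symmetric])
  also have "(a * (s mod M)) mod M = (a*s) mod M" by (rule mod_mult_right_eq)
  also have "(u + (a*s) mod M) mod M = (u + a*s) mod M" by (rule mod_add_right_eq)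
  finally show ?thesis .
qed
lemma mm2: "(p mod M + w * (q mod M)) mod M = (p + w*q) mod (M::nat)"
proof -
  have "(p mod M + w * (q mod M)) mod M = (p + w * (q mod M)) mod M" by (rule mod_add_left_eq)
  also have "\<dots> = (p + w*q) mod M" by (rule mm1)
  finally show ?thesis .
qed
lemma Hol_group: assumes e1: "e \<ge> 1" shows "group (Hol e)"
proof (rule groupI)
  have one: "\<one>\<^bsub>Hol e\<^esub> = (0, 1)" using e1 by (simp add: Hol_one)
  show "\<one>\<^bsub>Hol e\<^esub> \<in> carrier (Hol e)" using one e1 pow_gt1 by (simp add: Hol_carrier)
  fix x y assume x: "x \<in> carrier (Hol e)" and y: "y \<in> carrier (Hol e)"
  obtain u a where xe: "x = (u,a)" by force
  obtain v b where ye: "y = (v,b)" by force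
  have "odd a" "odd b" using x y xe ye by (auto simp: Hol_carrier)
  hence "odd (a*b mod 2^e)" using even_mod_pow2[OF e1, of "a*b"] by simp
  then show "x \<otimes>\<^bsub>Hol e\<^esub> y \<in> carrier (Hol e)" 
    by (simp add: xe ye Hol_mult Hol_carrier)
next
  fix x y z assume "x \<in> carrier (Hol e)" "y \<in> carrier (Hol e)" "z \<in> carrier (Hol e)"
  obtain u a where x: "x = (u,a)" by force
  obtain v b where y: "y = (v,b)" by force
  obtain w c where z: "z = (w,c)" by force
  have 1: "((u + v * a) mod 2 ^ e + w * (a * b mod 2 ^ e)) mod 2 ^ e = (u + (v + w * b) mod 2 ^ e * a) mod 2 ^ e"
    using mm1[of u a "v + w*b" "2^e"] mm2[of "u + v*a" "2^e" w "a*b"] by (simp add: algebra_simps)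
  have 2: "(a * b mod 2 ^ e * c) mod 2 ^ e = (a * (b * c mod 2 ^ e)) mod 2 ^ e"
    by (simp add: mod_mult_left_eq mod_mult_right_eq mult.assoc)
  show "x \<otimes>\<^bsub>Hol e\<^esub> y \<otimes>\<^bsub>Hol e\<^esub> z = x \<otimes>\<^bsub>Hol e\<^esub> (y \<otimes>\<^bsub>Hol e\<^esub> z)"
    unfolding x y z by (simp add: Hol_mult 1 2)
next
  fix x assume x: "x \<in> carrier (Hol e)"
  have one: "\<one>\<^bsub>Hol e\<^esub> = (0, 1)" using e1 by (simp add: Hol_one)
  show "\<one>\<^bsub>Hol e\<^esub> \<otimes>\<^bsub>Hol e\<^esub> x = x" using x
    by (auto simp: one Hol_mult Hol_carrier)
  obtain u a where xe: "x = (u,a)" by force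
  have ua: "u < 2^e" "a < 2^e" "odd a" using x xe by (auto simp: Hol_carrier)
  obtain b where b: "b < 2^e" "odd b" "(a * b) mod 2^e = 1" using odd_inverse[OF ua(3) e1] by blast
  define v where "v = (2^e - (u*b) mod 2^e) mod 2^e"
  have v: "v < 2^e" unfolding v_def by simp
  have "(v + u * b) mod 2^e = 0"
  proof -
    have "(v + u * b) mod 2^e = (2^e - (u*b) mod 2^e + u*b) mod 2^e"
      unfolding v_def by (simp add: mod_add_left_eq)
    also have "2^e - (u*b) mod 2^e + u*b = 2^e + 2^e * ((u*b) div 2^e)"
      using mod_less_eq_dividend[of "u*b" "2^e"] div_mult_mod_eq[of "u*b" "2^e"]
      by (smt (verit) add.commute add_diff_assoc2 diff_add_inverse2 mod_less_divisor mult.commute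
          order_less_imp_le zero_less_numeral zero_less_power)
    finally show ?thesis by simp
  qed
  moreover have "(b * a) mod 2^e = 1" using b by (simp add: mult.commute)
  ultimately show "\<exists>y\<in>carrier (Hol e). y \<otimes>\<^bsub>Hol e\<^esub> x = \<one>\<^bsub>Hol e\<^esub>"
    using v b by (intro bexI[of _ "(v,b)"]) (auto simp: xe one Hol_mult Hol_carrier)
qed

lemma Hol_one1: "e \<ge> 1 \<Longrightarrow> \<one>\<^bsub>Hol e\<^esub> = (0, 1)"
  using pow_gt1 by (simp add: Hol_one)

definition gs :: "nat \<Rightarrow> nat \<Rightarrow> nat" where "gs k a = (\<Sum>i<k. a^i)"

lemma gs_0[simp]: "gs 0 a = 0" by (simp add: gs_def)
lemma gs_Suc: "gs (Suc k) a = gs k a + a^k" by (simp add: gs_def)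
lemma gs_add: "gs (m + n) a = gs m a + a^m * gs n a"
  by (induction n) (simp_all add: gs_Suc algebra_simps power_add)
lemma gs_one: "gs k 1 = k" by (induction k) (simp_all add: gs_Suc)

lemma Hol_pow: "(u,a) [^]\<^bsub>Hol e\<^esub> (k::nat) = ((u * gs k a) mod 2^e, a^k mod 2^e)"
proof (induction k)
  case 0
  then show ?case by (simp add: Hol_one)
next
  case (Suc k)
  have 1: "(u * gs k a mod 2 ^ e + u * (a ^ k mod 2 ^ e)) mod 2 ^ e = (u * gs (Suc k) a) mod 2^e"
    using mm2[of "u * gs k a" "2^e" u "a^k"] by (simp add: gs_Suc algebra_simps)
  have 2: "(a ^ k mod 2 ^ e * a) mod 2 ^ e = a ^ Suc k mod 2^e"
    by (simp only: mod_mult_left_eq power_Suc2)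
  show ?case using Suc by (simp add: Hol_mult 1 2)
qed

lemma NT1:
  fixes a :: nat assumes "a mod 4 = 1"
  shows "\<exists>q. a^(2^j) = 1 + 2^(j+2) * q"
proof (induction j)
  case 0
  have "a = 1 + 4 * (a div 4)" using assms div_mult_mod_eq[of a 4] by simp
  then show ?case by (intro exI[of _ "a div 4"]) simp
next
  case (Suc j)
  then obtain q where q: "a^(2^j) = 1 + 2^(j+2) * q" by blast
  have "a^(2^Suc j) = (a^(2^j))^2" by (simp add: power_mult[symmetric] mult.commute)
  also have "\<dots> = 1 + 2^(Suc j + 2) * (q + 2^(j+1) * q^2)"
    unfolding q by (simp add: power2_eq_square algebra_simps power_add)
  finally show ?case by blast
qed

lemma NT2:
  fixes a :: nat assumes "a mod 4 = 1"
  shows "\<exists>m. odd m \<and> gs (2^j) a = 2^j * m"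
proof (induction j)
  case 0
  then show ?case by (simp add: gs_def)
next
  case (Suc j)
  then obtain m where m: "odd m" "gs (2^j) a = 2^j * m" by blast
  obtain q where q: "a^(2^j) = 1 + 2^(j+2) * q" using NT1[OF assms] by blast
  have "gs (2^Suc j) a = gs (2^j + 2^j) a" by (metis mult_2 power_Suc)
  also have "\<dots> = gs (2^j) a + a^(2^j) * gs (2^j) a" by (rule gs_add)
  also have "\<dots> = 2^Suc j * (m * (1 + 2^(j+1) * q))"
    unfolding q m by (simp add: algebra_simps power_add)
  finally show ?case using m(1) by auto
qed

lemma NT3:
  fixes m :: nat assumes "r \<ge> 2" "odd m"
  shows "\<exists>w. odd w \<and> (1 + 2^r * m)^(2^j) = 1 + 2^(r+j) * w"
proof (induction j)
  case 0
  then show ?case using assms by auto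
next
  case (Suc j)
  then obtain w where m: "odd w" "(1 + 2^r * m)^(2^j) = 1 + 2^(r+j) * w" by blast
  have "(1 + 2^r * m)^(2^Suc j) = ((1 + 2^r * m)^(2^j))^2" by (simp add: power_mult[symmetric] mult.commute)
  also have "\<dots> = 1 + 2^(r + Suc j) * (w + 2^(r+j-1) * w^2)"
  proof -
    have ee: "(r+j)+(r+j) = (r + Suc j) + (r+j-1)" using assms(1) by simp
    have "(2::nat)^(r+j) * 2^(r+j) = 2^(r + Suc j) * 2^(r+j-1)"
      by (simp only: power_add[symmetric] ee)
    then show ?thesis unfolding m(2) by (simp add: power2_eq_square algebra_simps)
  qed
  finally show ?case using m(1) assms(1) by (intro exI[of _ "w + 2^(r+j-1) * w^2"]) auto
qed

lemma half_mod: assumes "e \<ge> 1" "odd m" shows "(2^(e-1) * m) mod 2^e = (2::nat)^(e-1)"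
proof -
  obtain k where m: "m = 2*k+1" using assms(2) oddE by blast
  have e: "(2::nat)^e = 2 * 2^(e-1)" using assms(1) by (cases e) auto
  have "2^(e-1) * m = 2^(e-1) + 2^e * k" unfolding m e by (simp add: algebra_simps)
  then show ?thesis using e by simp
qed

lemma (in group) ord_pow2:
  assumes "x \<in> carrier G" "x [^] ((2::nat)^n) = \<one>" "x [^] ((2::nat)^(n-1)) \<noteq> \<one>" "n \<ge> 1"
  shows "ord x = 2^n"
proof -
  have "ord x dvd 2^n" using assms pow_eq_id by blast
  then obtain i where i: "i \<le> n" "ord x = 2^i" using divides_primepow_nat[of 2] by auto
  have "\<not> ord x dvd 2^(n-1)" using assms pow_eq_id by blast
  moreover have "i \<le> n - 1 \<Longrightarrow> ord x dvd 2^(n-1)" using i by (simp add: le_imp_power_dvd)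
  ultimately have "\<not> i \<le> n - 1" by blast
  thus ?thesis using i by auto
qed

lemma mod_cancel_nat: assumes "(c + d) mod M = (c + d') mod M" "d < M" "d' < (M::nat)" shows "d = d'"
proof -
  have *: "x = y" if h: "(c + x) mod M = (c + y) mod M" "x < M" "y \<le> x" for x y
  proof (rule ccontr)
    assume "x \<noteq> y"
    hence "0 < x - y" "x - y < M" using that by auto
    moreover have "M dvd (c + x) - (c + y)" using h mod_eq_dvd_iff_nat[of "c+y" "c+x" M] by simp
    ultimately show False using nat_dvd_not_less by simp
  qed
  show ?thesis
  proof (cases "d' \<le> d")
    case True thus ?thesis using * assms by blast
  next
    case False thus ?thesis using *[of d' d] assms by simp
  qed
qed
lemma (in group) sub_pow: "subgroup H G \<Longrightarrow> x \<in> H \<Longrightarrow> x [^] (n::nat) \<in> H"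
  by (induction n) (auto simp: subgroup.one_closed subgroup.m_closed)

lemma odd_decomp: "(n::nat) > 0 \<Longrightarrow> \<exists>r m. odd m \<and> n = 2^r * m"
proof (induction n rule: less_induct)
  case (less n)
  show ?case
  proof (cases "odd n")
    case True thus ?thesis by (intro exI[of _ 0] exI[of _ n]) simp
  next
    case False
    then obtain n' where n': "n = 2 * n'" by blast
    hence "n' < n" "n' > 0" using less.prems by auto
    then obtain r m where "odd m" "n' = 2^r * m" using less.IH by blast
    thus ?thesis using n' by (intro exI[of _ "Suc r"] exI[of _ m]) simp
  qed
qed

lemma ex_step: "P (0::nat) \<Longrightarrow> \<not> P e \<Longrightarrow> \<exists>t<e. P t \<and> \<not> P (Suc t)"
proof (induction e)
  case 0 thus ?case by simp
next
  case (Suc e)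
  show ?case
  proof (cases "P e")
    case True thus ?thesis using Suc.prems by blast
  next
    case False thus ?thesis using Suc by (meson less_Suc_eq)
  qed
qed



theorem lemma5p5:
  fixes e :: nat and G :: "(nat \<times> nat) set"
  assumes e2: "e \<ge> 2"
    and sub: "subgroup G (Hol e)"
    and trans: "transitive_sub e G"
    and nonreg: "\<not> regular_sub e G"
  shows "(2^(e-1), 1) \<in> centre ((Hol e)\<lparr>carrier := G\<rparr>)
      \<and> group.ord (Hol e) (2^(e-1), 1) = 2
      \<and> cyclic_group (((Hol e)\<lparr>carrier := G\<rparr>)\<lparr>carrier := centre ((Hol e)\<lparr>carrier := G\<rparr>)\<rparr>)
      \<and> ((\<forall>g \<in> G. group.ord (Hol e) g \<noteq> 2^e) \<longrightarrow>
           (2^(e-2), 1 + 2^(e-1)) \<in> centre ((Hol e)\<lparr>carrier := G\<rparr>)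
           \<and> group.ord (Hol e) (2^(e-2), 1 + 2^(e-1)) = 4)"
proof -
  define M where "M = (2::nat)^e"
  have e1: "e \<ge> 1" using e2 by simp
  interpret H: group "Hol e" using Hol_group[OF e1] .
  have one: "\<one>\<^bsub>Hol e\<^esub> = (0,1)" using Hol_one1[OF e1] .
  have M1: "1 < M" unfolding M_def using pow_gt1[OF e1] .
  have Gc: "u < M \<and> a < M \<and> odd a" if "(u,a) \<in> G" for u a
    using subgroup.subset[OF sub] that unfolding M_def by (auto simp: Hol_carrier)
  have oneG: "(0,1) \<in> G" using subgroup.one_closed[OF sub] one by simp
  have mG: "x \<otimes>\<^bsub>Hol e\<^esub> y \<in> G" if "x \<in> G" "y \<in> G" for x y
    using subgroup.m_closed[OF sub] that by blast
  have powG: "x [^]\<^bsub>Hol e\<^esub> (n::nat) \<in> G" if "x \<in> G" for x n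
    using H.sub_pow[OF sub that] .
  have exu: "\<exists>a. (w,a) \<in> G" if "w < M" for w
  proof -
    have "0 < M" "w < M" using M1 that by auto
    then obtain g where g: "g \<in> G" "hol_act e g 0 = w"
      using trans unfolding transitive_sub_def M_def by blast
    obtain u a where ga: "g = (u,a)" by force
    have "u < M" using Gc g ga by blast
    hence "u = w" using g ga by (simp add: hol_act_def M_def)
    thus ?thesis using g ga by blast
  qed
  have exb: "\<exists>b. (0,b) \<in> G \<and> b \<noteq> 1"
  proof (rule ccontr)
    assume nb: "\<not> ?thesis"
    have "stab1 e G = {(0,1)}"
    proof (intro equalityI subsetI)
      fix x assume x: "x \<in> stab1 e G"
      obtain u a where xa: "x = (u,a)" by force
      have "(u,a) \<in> G" "(u mod M) = 0" using x xa by (auto simp: stab1_def hol_act_def M_def)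
      moreover hence "u = 0" using Gc by simp
      ultimately show "x \<in> {(0,1)}" using xa nb by auto
    next
      fix x assume "x \<in> {(0::nat,1::nat)}"
      thus "x \<in> stab1 e G" using oneG by (simp add: stab1_def hol_act_def)
    qed
    hence "stab1 e G = {\<one>\<^bsub>Hol e\<^esub>}" using one by simp
    thus False using nonreg trans unfolding regular_sub_def by blast
  qed
  then obtain b where b: "(0,b) \<in> G" "b \<noteq> 1" by blast
  obtain a1 where a1: "(1,a1) \<in> G" using exu M1 by blast
  have Gcar: "x \<in> carrier (Hol e)" if "x \<in> G" for x
    using subgroup.subset[OF sub] that by blast
  have invG: "inv\<^bsub>Hol e\<^esub> x \<in> G" if "x \<in> G" for x
    using subgroup.m_inv_closed[OF sub] that by blast
  have mult: "(p1,q1) \<otimes>\<^bsub>Hol e\<^esub> (p2,q2) = ((p1 + p2*q1) mod M, (q1*q2) mod M)" for p1 q1 p2 q2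
    by (simp add: Hol_mult M_def)
  have powf: "(u,a) [^]\<^bsub>Hol e\<^esub> (k::nat) = ((u * gs k a) mod M, a^k mod M)" for u a k
    by (simp add: Hol_pow M_def)
  have gs1: "gs k (Suc 0) = k" for k using gs_one[of k] by simp
  have diffel: "\<exists>p. (p,1) \<in> G \<and> (p + v) mod M = u" if xy: "(u,a) \<in> G" "(v,a) \<in> G" for u v a
  proof -
    define m where "m = (u,a) \<otimes>\<^bsub>Hol e\<^esub> inv\<^bsub>Hol e\<^esub> (v,a)"
    have mG': "m \<in> G" unfolding m_def using mG invG xy by blast
    have "m \<otimes>\<^bsub>Hol e\<^esub> (v,a) = (u,a)" unfolding m_def
      using Gcar xy by (simp add: H.m_assoc)
    moreover obtain p q where pq: "m = (p,q)" by force
    ultimately have eq: "(p + v*q) mod M = u" "(q*a) mod M = a" by (simp_all add: mult)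
    have qM: "q < M" and aodd: "odd a" using Gc mG' pq xy by auto
    obtain a' where a': "(a * a') mod M = 1" using odd_inverse[OF aodd e1] unfolding M_def by blast
    have "q = q mod M" using qM by simp
    also have "\<dots> = (q * ((a * a') mod M)) mod M" using a' by simp
    also have "\<dots> = ((q * a) * a') mod M" by (simp add: mod_mult_right_eq mult.assoc)
    also have "\<dots> = (((q * a) mod M) * a') mod M" by (simp add: mod_mult_left_eq)
    also have "\<dots> = 1" using eq(2) a' by simp
    finally have "q = 1" .
    thus ?thesis using eq(1) mG' pq by auto
  qed
  have bM: "b < M" "odd b" using Gc b by auto
  have a1M: "a1 < M" "odd a1" using Gc a1 by auto
  have c1G: "(2^(e-1), 1) \<in> G"
  proof -
    have x: "(b, (b*a1) mod M) \<in> G" using mG[OF b(1) a1] bM by (simp add: mult)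
    have y: "(1, (b*a1) mod M) \<in> G" using mG[OF a1 b(1)] M1 by (simp add: mult mult.commute)
    obtain p where p: "(p,1) \<in> G" "(p + 1) mod M = b" using diffel[OF x y] by blast
    have pM: "p < M" using Gc p(1) by blast
    have "p + 1 \<noteq> M" using p(2) bM by auto
    hence "p + 1 < M" using pM by simp
    hence pb: "p + 1 = b" using p(2) by simp
    hence "p > 0" using b(2) by simp
    then obtain r m where rm: "odd m" "p = 2^r * m" using odd_decomp by blast
    have "2^r \<le> p" using rm by (metis dvd_imp_le dvd_triv_left \<open>p > 0\<close>)
    hence "(2::nat)^r < 2^e" using pM unfolding M_def by (rule le_less_trans)
    hence re: "r < e" by simp
    have "(p,1) [^]\<^bsub>Hol e\<^esub> ((2::nat)^(e-1-r)) \<in> G" using powG[OF p(1)] .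
    moreover have "p * 2^(e-1-r) = 2^(e-1) * m" using rm re
      by (simp add: power_add[symmetric] algebra_simps)
    ultimately have "((2^(e-1) * m) mod M, 1) \<in> G" using M1 by (simp add: powf gs1)
    thus ?thesis using half_mod[OF e1 rm(1)] unfolding M_def by simp
  qed
  define Z where "Z = {z \<in> G. \<forall>g\<in>G. z \<otimes>\<^bsub>Hol e\<^esub> g = g \<otimes>\<^bsub>Hol e\<^esub> z}"
  have Zeq: "centre (Hol e\<lparr>carrier := G\<rparr>) = Z" by (simp add: centre_def Z_def)
  have c1Z: "(2^(e-1),1) \<in> Z"
  proof -
    have "(2^(e-1),1) \<otimes>\<^bsub>Hol e\<^esub> g = g \<otimes>\<^bsub>Hol e\<^esub> (2^(e-1),1)" if "g\<in>G" for g
    proof -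
      obtain u a where g: "g = (u,a)" by force
      have a: "odd a" "a < M" using Gc that g by auto
      have ca: "(2^(e-1) * a) mod M = 2^(e-1)" using half_mod[OF e1 a(1)] M_def by simp
      have "(u + 2^(e-1)*a) mod M = (u + (2^(e-1)*a) mod M) mod M" by (simp add: mod_add_right_eq)
      also have "\<dots> = (2^(e-1) + u) mod M" using ca by (simp add: add.commute)
      finally show ?thesis using a by (simp add: g mult)
    qed
    thus ?thesis using c1G unfolding Z_def by blast
  qed
  have ord2: "H.ord (2^(e-1),1) = 2"
  proof -
    have xc: "(2 ^ (e - 1), 1) \<in> carrier (Hol e)" using Gcar c1G by blast
    have "2^(e-1) * 2 = M" unfolding M_def using e1 by (cases e) auto
    hence x1: "(2 ^ (e - 1), 1) [^]\<^bsub>Hol e\<^esub> ((2::nat)^1) = \<one>\<^bsub>Hol e\<^esub>"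
      using M1 by (simp add: powf gs1 one mult)
    have "(2::nat)^(e-1) < M" unfolding M_def using e1 by simp
    hence x0: "(2 ^ (e - 1), 1) [^]\<^bsub>Hol e\<^esub> ((2::nat)^(1-1)) \<noteq> \<one>\<^bsub>Hol e\<^esub>"
      using M1 by (simp add: powf gs1 one mult)
    show ?thesis using H.ord_pow2[OF xc x1 x0] by simp
  qed
  have Zsub: "subgroup Z (Hol e)"
  proof (rule H.subgroupI)
    show "Z \<subseteq> carrier (Hol e)" using Gcar unfolding Z_def by blast
    show "Z \<noteq> {}" using c1Z by blast
  next
    fix z assume z: "z \<in> Z"
    hence zG: "z \<in> G" and zc: "\<And>g. g \<in> G \<Longrightarrow> z \<otimes>\<^bsub>Hol e\<^esub> g = g \<otimes>\<^bsub>Hol e\<^esub> z" unfolding Z_def by auto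
    have zC: "z \<in> carrier (Hol e)" using Gcar zG by blast
    have "inv\<^bsub>Hol e\<^esub> z \<otimes>\<^bsub>Hol e\<^esub> g = g \<otimes>\<^bsub>Hol e\<^esub> inv\<^bsub>Hol e\<^esub> z" if g: "g \<in> G" for g
    proof -
      have gC: "g \<in> carrier (Hol e)" using Gcar g by blast
      have "inv\<^bsub>Hol e\<^esub> z \<otimes>\<^bsub>Hol e\<^esub> g = inv\<^bsub>Hol e\<^esub> z \<otimes>\<^bsub>Hol e\<^esub> (g \<otimes>\<^bsub>Hol e\<^esub> z) \<otimes>\<^bsub>Hol e\<^esub> inv\<^bsub>Hol e\<^esub> z"
        using zC gC by (simp add: H.m_assoc)
      also have "\<dots> = inv\<^bsub>Hol e\<^esub> z \<otimes>\<^bsub>Hol e\<^esub> (z \<otimes>\<^bsub>Hol e\<^esub> g) \<otimes>\<^bsub>Hol e\<^esub> inv\<^bsub>Hol e\<^esub> z"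
        using zc[OF g] by simp
      also have "\<dots> = g \<otimes>\<^bsub>Hol e\<^esub> inv\<^bsub>Hol e\<^esub> z"
        using zC gC by (simp add: H.m_assoc[symmetric])
      finally show ?thesis .
    qed
    thus "inv\<^bsub>Hol e\<^esub> z \<in> Z" using invG[OF zG] unfolding Z_def by blast
  next
    fix z1 z2 assume z: "z1 \<in> Z" "z2 \<in> Z"
    hence zG: "z1 \<in> G" "z2 \<in> G" and zc: "\<And>g. g \<in> G \<Longrightarrow> z1 \<otimes>\<^bsub>Hol e\<^esub> g = g \<otimes>\<^bsub>Hol e\<^esub> z1"
      "\<And>g. g \<in> G \<Longrightarrow> z2 \<otimes>\<^bsub>Hol e\<^esub> g = g \<otimes>\<^bsub>Hol e\<^esub> z2" unfolding Z_def by auto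
    have zC: "z1 \<in> carrier (Hol e)" "z2 \<in> carrier (Hol e)" using Gcar zG by auto
    have "z1 \<otimes>\<^bsub>Hol e\<^esub> z2 \<otimes>\<^bsub>Hol e\<^esub> g = g \<otimes>\<^bsub>Hol e\<^esub> (z1 \<otimes>\<^bsub>Hol e\<^esub> z2)" if g: "g \<in> G" for g
    proof -
      have gC: "g \<in> carrier (Hol e)" using Gcar g by blast
      have "z1 \<otimes>\<^bsub>Hol e\<^esub> z2 \<otimes>\<^bsub>Hol e\<^esub> g = z1 \<otimes>\<^bsub>Hol e\<^esub> (z2 \<otimes>\<^bsub>Hol e\<^esub> g)"
        using zC gC by (simp add: H.m_assoc)
      also have "\<dots> = z1 \<otimes>\<^bsub>Hol e\<^esub> g \<otimes>\<^bsub>Hol e\<^esub> z2" using zc(2)[OF g] zC gC by (simp add: H.m_assoc)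
      also have "\<dots> = g \<otimes>\<^bsub>Hol e\<^esub> z1 \<otimes>\<^bsub>Hol e\<^esub> z2" using zc(1)[OF g] by simp
      also have "\<dots> = g \<otimes>\<^bsub>Hol e\<^esub> (z1 \<otimes>\<^bsub>Hol e\<^esub> z2)" using zC gC by (simp add: H.m_assoc)
      finally show ?thesis .
    qed
    thus "z1 \<otimes>\<^bsub>Hol e\<^esub> z2 \<in> Z" using mG[OF zG] unfolding Z_def by blast
  qed
  have Z1: "(c + d) mod M = (1 + c * a1) mod M" if "(c,d) \<in> Z" for c d
  proof -
    have "(c,d) \<otimes>\<^bsub>Hol e\<^esub> (1,a1) = (1,a1) \<otimes>\<^bsub>Hol e\<^esub> (c,d)" using that a1 unfolding Z_def by blast
    thus ?thesis by (simp add: mult)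
  qed
  have Zinj: "d = d'" if "(c,d) \<in> Z" "(c,d') \<in> Z" for c d d'
  proof -
    have "(c + d) mod M = (c + d') mod M" using Z1[OF that(1)] Z1[OF that(2)] by simp
    moreover have "d < M" "d' < M" using that Gc unfolding Z_def by auto
    ultimately show ?thesis by (rule mod_cancel_nat)
  qed
  have Zeven: "even c" if "(c,d) \<in> Z" for c d
  proof (rule ccontr)
    assume codd: "\<not> even c"
    have "(c,d) \<otimes>\<^bsub>Hol e\<^esub> (0,b) = (0,b) \<otimes>\<^bsub>Hol e\<^esub> (c,d)" using that b(1) unfolding Z_def by blast
    hence "c mod M = (c * b) mod M" by (simp add: mult)
    moreover have "c \<le> c * b" using bM by (cases b) auto
    ultimately have "M dvd c * b - c" using mod_eq_dvd_iff_nat by metis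
    hence "M dvd (b - 1) * c" by (simp add: algebra_simps diff_mult_distrib2)
    moreover have "coprime M c" using codd e1 unfolding M_def by simp
    ultimately have "M dvd b - 1" using coprime_dvd_mult_left_iff by blast
    moreover have "b - 1 < M" using bM by simp
    ultimately have "b - 1 = 0" using nat_dvd_not_less by (metis gr0I)
    thus False using b(2) bM by (cases b) auto
  qed
  define P where "P j = (\<forall>z\<in>Z. (2::nat)^j dvd fst z)" for j
  have P0: "P 0" by (simp add: P_def)
  have P1: "P 1" unfolding P_def using Zeven by auto
  have nPe: "\<not> P e"
  proof
    assume "P e"
    hence "(2::nat)^e dvd 2^(e-1)" using c1Z unfolding P_def by fastforce
    moreover have "(2::nat)^(e-1) < 2^e" "0 < (2::nat)^(e-1)" using e1 by auto
    ultimately show False using nat_dvd_not_less by blast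
  qed
  obtain t where t: "t < e" "P t" "\<not> P (Suc t)" using ex_step[of P, OF P0 nPe] by blast
  have t1: "t \<ge> 1" using t(3) P1 by (cases t) auto
  obtain c0 d0 where z0: "(c0,d0) \<in> Z" "\<not> 2^(Suc t) dvd c0" using t(3) unfolding P_def by auto
  have "2^t dvd c0" using t(2) z0(1) unfolding P_def by fastforce
  then obtain m0 where m0: "c0 = 2^t * m0" by blast
  have m0odd: "odd m0"
  proof
    assume "even m0"
    then obtain k where "m0 = 2*k" by blast
    hence "c0 = 2^(Suc t) * k" using m0 by simp
    thus False using z0(2) by simp
  qed
  have d0: "d0 mod 4 = 1"
  proof -
    have "(2::nat)^2 dvd 2^e" by (rule le_imp_power_dvd[OF e2])
    hence "(4::nat) dvd M" unfolding M_def by simp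
    hence mm: "(x mod M) mod 4 = x mod 4" for x by (rule mod_mod_cancel)
    have eq: "(c0 + d0) mod 4 = (1 + c0 * a1) mod 4" using Z1[OF z0(1)] mm[of "c0+d0"] mm[of "1 + c0*a1"] by simp
    have "even c0" using Zeven z0(1) by blast
    then obtain k where k: "c0 = 2*k" by blast
    obtain l where l: "a1 = 2*l+1" using a1M(2) oddE by blast
    have "c0 * a1 = 2*k + 4*(k*l)" unfolding k l by (simp add: algebra_simps)
    hence "(2*k + d0) mod 4 = (1 + 2*k + 4*(k*l)) mod 4" using eq k by simp
    thus ?thesis by presburger
  qed
  interpret Zg: group "Hol e\<lparr>carrier := Z\<rparr>" using H.subgroup_imp_group[OF Zsub] .
  have powZ: "x [^]\<^bsub>Hol e\<lparr>carrier := Z\<rparr>\<^esub> (n::nat) = x [^]\<^bsub>Hol e\<^esub> n" for x n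
    by (simp add: nat_pow_def)
  have oneZ: "\<one>\<^bsub>Hol e\<lparr>carrier := Z\<rparr>\<^esub> = (0,1)" using one by simp
  have oneZ': "(0,1) \<in> Z" using Zsub one subgroup.one_closed by fastforce
  have ordz0: "Zg.ord (c0,d0) = 2^(e-t)"
  proof -
    obtain m1 where m1: "odd m1" "gs (2^(e-t)) d0 = 2^(e-t) * m1" using NT2[OF d0] by blast
    obtain m2 where m2: "odd m2" "gs (2^(e-t-1)) d0 = 2^(e-t-1) * m2" using NT2[OF d0] by blast
    have "c0 * gs (2^(e-t)) d0 = M * (m0 * m1)" unfolding m0 m1(2) M_def using t(1)
      by (simp add: power_add[symmetric] algebra_simps)
    hence "fst ((c0,d0) [^]\<^bsub>Hol e\<^esub> ((2::nat)^(e-t))) = 0" by (simp add: powf)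
    moreover have "(c0,d0) [^]\<^bsub>Hol e\<^esub> ((2::nat)^(e-t)) \<in> Z" using H.sub_pow[OF Zsub z0(1)] .
    ultimately have "(c0,d0) [^]\<^bsub>Hol e\<^esub> ((2::nat)^(e-t)) = (0,1)" using Zinj oneZ'
      by (metis prod.collapse)
    hence x1: "(c0,d0) [^]\<^bsub>Hol e\<lparr>carrier := Z\<rparr>\<^esub> ((2::nat)^(e-t)) = \<one>\<^bsub>Hol e\<lparr>carrier := Z\<rparr>\<^esub>"
      by (simp add: powZ oneZ)
    have "c0 * gs (2^(e-t-1)) d0 = 2^(e-1) * (m0 * m2)" unfolding m0 m2(2) using t(1)
      by (simp add: power_add[symmetric] algebra_simps)
    moreover have "(2^(e-1) * (m0 * m2)) mod M = 2^(e-1)" using half_mod[OF e1, of "m0*m2"] m0odd m2(1) M_def by simp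
    ultimately have "fst ((c0,d0) [^]\<^bsub>Hol e\<^esub> ((2::nat)^(e-t-1))) \<noteq> 0" by (simp add: powf)
    hence x0: "(c0,d0) [^]\<^bsub>Hol e\<lparr>carrier := Z\<rparr>\<^esub> ((2::nat)^(e-t-1)) \<noteq> \<one>\<^bsub>Hol e\<lparr>carrier := Z\<rparr>\<^esub>"
      by (auto simp add: powZ oneZ)
    show ?thesis using Zg.ord_pow2[of "(c0,d0)" "e-t"] z0(1) x1 x0 t(1) by simp
  qed
  have finZ: "finite Z"
  proof -
    have "Z \<subseteq> {..<M} \<times> {..<M}" using Gc unfolding Z_def by auto
    thus ?thesis by (rule finite_subset) simp
  qed
  have cardZ: "card Z \<le> 2^(e-t)"
  proof -
    have inj: "inj_on fst Z" using Zinj by (intro inj_onI) (metis prod.collapse)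
    have "fst ` Z \<subseteq> (\<lambda>k. 2^t * k) ` {..<2^(e-t)}"
    proof
      fix c assume "c \<in> fst ` Z"
      then obtain z where z: "z \<in> Z" "c = fst z" by blast
      have "2^t dvd c" using t(2) z unfolding P_def by blast
      then obtain k where k: "c = 2^t * k" by blast
      have "c < M" using z Gc unfolding Z_def by (metis (no_types, lifting) mem_Collect_eq prod.collapse)
      hence "2^t * k < 2^t * 2^(e-t)" using k t(1) unfolding M_def by (simp add: power_add[symmetric])
      hence "k < 2^(e-t)" by simp
      thus "c \<in> (\<lambda>k. 2^t * k) ` {..<2^(e-t)}" using k by blast
    qed
    hence "card (fst ` Z) \<le> card ((\<lambda>k. (2::nat)^t * k) ` {..<2^(e-t)})" by (intro card_mono) auto
    also have "\<dots> \<le> 2^(e-t)" using card_image_le[of "{..<(2::nat)^(e-t)}" "\<lambda>k. (2::nat)^t * k"] by simp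
    finally show ?thesis using card_image[OF inj] by simp
  qed
  have genZ: "generate (Hol e\<lparr>carrier := Z\<rparr>) {(c0,d0)} = Z"
  proof (rule card_subset_eq[OF finZ])
    show sub': "generate (Hol e\<lparr>carrier := Z\<rparr>) {(c0,d0)} \<subseteq> Z"
      using Zg.generate_incl[of "{(c0,d0)}"] z0(1) by simp
    have "card (generate (Hol e\<lparr>carrier := Z\<rparr>) {(c0,d0)}) = 2^(e-t)"
      using Zg.generate_pow_card[of "(c0,d0)"] z0(1) ordz0 by simp
    moreover have "card (generate (Hol e\<lparr>carrier := Z\<rparr>) {(c0,d0)}) \<le> card Z"
      using card_mono[OF finZ sub'] .
    ultimately show "card (generate (Hol e\<lparr>carrier := Z\<rparr>) {(c0,d0)}) = card Z" using cardZ by simp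
  qed
  have cyc: "cyclic_group (((Hol e)\<lparr>carrier := G\<rparr>)\<lparr>carrier := centre ((Hol e)\<lparr>carrier := G\<rparr>)\<rparr>)"
  proof -
    have "subgroup_generated (Hol e\<lparr>carrier := Z\<rparr>) {(c0,d0)} = Hol e\<lparr>carrier := Z\<rparr>"
      unfolding subgroup_generated_def using z0(1) genZ by simp
    hence "cyclic_group (Hol e\<lparr>carrier := Z\<rparr>)" unfolding cyclic_group_def using z0(1) by force
    thus ?thesis by (simp add: Zeq)
  qed
  have partB: "(\<forall>g \<in> G. H.ord g \<noteq> 2^e) \<longrightarrow> (2^(e-2), 1 + 2^(e-1)) \<in> Z \<and> H.ord (2^(e-2), 1 + 2^(e-1)) = 4"
  proof
    assume nord: "\<forall>g \<in> G. H.ord g \<noteq> 2^e"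
    have ordM: "H.ord (u,a) = 2^e" if ua: "(u,a)\<in>G" "odd u" "a mod 4 = 1" for u a
    proof -
      have xc: "(u,a) \<in> carrier (Hol e)" using Gcar ua(1) by blast
      obtain m1 where m1: "odd m1" "gs (2^e) a = 2^e * m1" using NT2[OF ua(3)] by blast
      obtain m2 where m2: "odd m2" "gs (2^(e-1)) a = 2^(e-1) * m2" using NT2[OF ua(3)] by blast
      obtain q where q: "a^(2^e) = 1 + 2^(e+2) * q" using NT1[OF ua(3)] by blast
      have "u * gs (2^e) a = M * (u * m1)" unfolding m1(2) M_def by simp
      hence f1: "(u * gs (2^e) a) mod M = 0" by (simp only:) simp
      have "a^(2^e) = 1 + M * (4*q)" unfolding q M_def by (simp add: power_add)
      moreover have "(1 + M * (4*q)) mod M = 1 mod M"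
        by (rule mod_mult_self1 | rule mod_mult_self2 | rule mod_mult_self3 | rule mod_mult_self4)
      ultimately have f2: "(a^(2^e)) mod M = 1" using M1 by simp
      have x1: "(u,a) [^]\<^bsub>Hol e\<^esub> ((2::nat)^e) = \<one>\<^bsub>Hol e\<^esub>"
        using f1 f2 by (simp add: powf one)
      have g: "u * gs (2^(e-1)) a = 2^(e-1) * (u * m2)" unfolding m2(2) by simp
      have hm: "(2^(e-1) * (u * m2)) mod M = 2^(e-1)" using half_mod[OF e1, of "u*m2"] ua(2) m2(1) M_def by simp
      have f3: "(u * gs (2^(e-1)) a) mod M \<noteq> 0" by (simp only: g hm) simp
      have x0: "(u,a) [^]\<^bsub>Hol e\<^esub> ((2::nat)^(e-1)) \<noteq> \<one>\<^bsub>Hol e\<^esub>"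
        using f3 by (simp add: powf one)
      show ?thesis using H.ord_pow2[OF xc x1 x0 e1] .
    qed
    have B1: "a mod 4 = 3" if ua: "(u,a)\<in>G" "odd u" for u a
    proof -
      have "odd a" using Gc ua(1) by blast
      hence "a mod 4 = 1 \<or> a mod 4 = 3" by presburger
      moreover have "a mod 4 \<noteq> 1" using ordM[OF ua] nord ua(1) by blast
      ultimately show ?thesis by blast
    qed
    have a13: "a1 mod 4 = 3" using B1[OF a1] by simp
    have B2: "a mod 4 = 1" if ua: "(u,a)\<in>G" "even u" for u a
    proof (rule ccontr)
      assume na: "a mod 4 \<noteq> 1"
      have "odd a" using Gc ua(1) by blast
      hence a3: "a mod 4 = 3" using na by presburger
      have pG: "((1 + u*a1) mod M, (a1*a) mod M) \<in> G" using mG[OF a1 ua(1)] by (simp add: mult)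
      have "odd ((1 + u*a1) mod M)" using ua(2) even_mod_pow2[OF e1, of "1 + u*a1"] unfolding M_def by simp
      hence "((a1*a) mod M) mod 4 = 3" using B1[OF pG] by blast
      moreover have "(2::nat)^2 dvd 2^e" by (rule le_imp_power_dvd[OF e2])
      hence "(4::nat) dvd M" unfolding M_def by simp
      hence "((a1*a) mod M) mod 4 = (a1*a) mod 4" by (rule mod_mod_cancel)
      moreover have "(a1*a) mod 4 = ((a1 mod 4) * (a mod 4)) mod 4" by (simp add: mod_mult_eq)
      ultimately show False using a13 a3 by simp
    qed
    have b4: "b mod 4 = 1" using B2[OF b(1)] by simp
    have e3: "e \<ge> 3"
    proof (rule ccontr)
      assume "\<not> e \<ge> 3"
      hence "e = 2" using e2 by simp
      hence "b < 4" using bM unfolding M_def by simp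
      thus False using b4 b(2) by presburger
    qed
    define K where "K = (2::nat)^(e-2)"
    have MK: "M = 4 * K"
    proof -
      have ee: "e = (e-2)+2" using e2 by arith
      have "(2::nat)^e = 2^((e-2)+2)" by (subst ee) (rule refl)
      also have "\<dots> = 4 * 2^(e-2)" by (simp add: power_add)
      finally show ?thesis unfolding M_def K_def .
    qed
    have K2: "(2::nat)^(e-1) = 2 * K"
    proof -
      have ee: "e - 1 = (e-2)+1" using e2 by arith
      have "(2::nat)^(e-1) = 2^((e-2)+1)" by (simp only: ee)
      also have "\<dots> = 2 * 2^(e-2)" by (simp add: power_add)
      finally show ?thesis unfolding K_def .
    qed
    have Keven: "even K" unfolding K_def using e3 by simp
    have Kpos: "K > 0" unfolding K_def by simp
    have mself: "(x + M*y) mod M = x mod M" for x y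
      by (rule mod_mult_self1 | rule mod_mult_self2 | rule mod_mult_self3 | rule mod_mult_self4)
    have D1: "1 + 2*K < M" using MK Kpos Keven by simp
    have hG: "(0, 1 + 2*K) \<in> G"
    proof -
      have bp: "b - 1 > 0" using b(2) bM(2) by (cases b) auto
      obtain r m where rm: "odd m" "b - 1 = 2^r * m" using odd_decomp[OF bp] by blast
      have d4: "(4::nat) dvd b - 1" using b4 by presburger
      have r2: "r \<ge> 2"
      proof (rule ccontr)
        assume "\<not> 2 \<le> r"
        hence "r = 0 \<or> r = 1" by arith
        thus False
        proof
          assume "r = 0" hence "(4::nat) dvd m" using d4 rm by simp
          thus False using rm(1) by presburger
        next
          assume "r = 1" hence "(4::nat) dvd 2*m" using d4 rm by simp
          thus False using rm(1) by presburger
        qed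
      qed
      have "m \<ge> 1" using rm(1) by (cases m) auto
      hence "2^r \<le> b - 1" using rm(2) by simp
      moreover have "b - 1 < M" using bM by simp
      ultimately have "(2::nat)^r < 2^e" unfolding M_def by (rule le_less_trans)
      hence re: "r < e" by simp
      have bb0: "b = 1 + (b - 1)" using bp by arith
      have bb: "b = 1 + 2^r * m" using bb0 unfolding rm(2) .
      obtain m' where m': "odd m'" "(1 + 2^r*m)^(2^(e-1-r)) = 1 + 2^(r + (e-1-r)) * m'"
        using NT3[OF r2 rm(1)] by blast
      have "r + (e-1-r) = e - 1" using re by simp
      hence bp2: "b^(2^(e-1-r)) = 1 + 2*K*m'" using m'(2) bb K2 by simp
      obtain i where i: "m' = 2*i+1" using m'(1) oddE by blast
      have eq: "1 + 2*K*m' = (1 + 2*K) + M*i" unfolding i MK by (simp add: algebra_simps)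
      have "(b^(2^(e-1-r))) mod M = 1 + 2*K" unfolding bp2 eq mself using D1 by simp
      moreover have "(0,b) [^]\<^bsub>Hol e\<^esub> ((2::nat)^(e-1-r)) \<in> G" using powG[OF b(1)] .
      ultimately show ?thesis by (simp add: powf)
    qed
    have M2: "2 < M" using MK Kpos Keven by simp
    obtain a2 where a2: "(2,a2) \<in> G" using exu[OF M2] by blast
    have a24: "a2 mod 4 = 1" using B2[OF a2] by simp
    obtain m3 where m3: "odd m3" "gs (2^(e-3)) a2 = 2^(e-3) * m3" using NT2[OF a24] by blast
    obtain q where q: "a2^(2^(e-3)) = 1 + 2^(e-3+2) * q" using NT1[OF a24] by blast
    have K3: "2 * 2^(e-3) = K"
    proof -
      have ee: "e - 2 = (e-3)+1" using e3 by arith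
      show ?thesis unfolding K_def by (simp only: ee power_add) simp
    qed
    have e32: "e - 3 + 2 = e - 1" using e3 by arith
    have yG: "((K * m3) mod M, (1 + 2*K*q) mod M) \<in> G"
    proof -
      have "(2,a2) [^]\<^bsub>Hol e\<^esub> ((2::nat)^(e-3)) \<in> G" using powG[OF a2] .
      moreover have "2 * gs (2^(e-3)) a2 = K * m3" using m3(2) K3 by (metis mult.assoc)
      moreover have "a2^(2^(e-3)) = 1 + 2*K*q" unfolding q e32 K2 by simp
      ultimately show ?thesis by (simp add: powf)
    qed
    define c where "c = (K * m3) mod M"
    have cG: "(c, 1) \<in> G"
    proof (cases "even q")
      case True
      then obtain q' where "q = 2*q'" by blast
      hence eq: "1 + 2*K*q = 1 + M*q'" unfolding MK by simp
      have "(1 + 2*K*q) mod M = 1" unfolding eq mself using M1 by simp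
      thus ?thesis using yG c_def by simp
    next
      case False
      then obtain q' where "q = 2*q'+1" using oddE by blast
      hence eq: "1 + 2*K*q = (1 + 2*K) + M*q'" unfolding MK by (simp add: algebra_simps)
      have "(1 + 2*K*q) mod M = 1 + 2*K" unfolding eq mself using D1 by simp
      hence y: "(c, 1 + 2*K) \<in> G" using yG c_def by simp
      have eq2: "(1 + 2*K) * (1 + 2*K) = 1 + M * (1 + K)" unfolding MK by (simp add: algebra_simps)
      have "((1 + 2*K) * (1 + 2*K)) mod M = 1" unfolding eq2 mself using M1 by simp
      moreover have "c mod M = c" unfolding c_def by simp
      ultimately show ?thesis using mG[OF y hG] by (simp add: mult)
    qed
    have KG: "(K, 1) \<in> G"
    proof -
      have "m3 mod 4 = 1 \<or> m3 mod 4 = 3" using m3(1) by presburger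
      thus ?thesis
      proof
        assume "m3 mod 4 = 1"
        then obtain i where "m3 = 4*i + 1" by (metis div_mult_mod_eq mult.commute)
        hence eq: "K * m3 = K + M * i" unfolding MK by (simp add: algebra_simps)
        have "c = K" unfolding c_def eq mself using MK Kpos by simp
        thus ?thesis using cG by simp
      next
        assume "m3 mod 4 = 3"
        then obtain i where "m3 = 4*i + 3" by (metis div_mult_mod_eq mult.commute)
        hence eq: "K * m3 = 3*K + M * i" unfolding MK by (simp add: algebra_simps)
        have c3: "c = 3*K" unfolding c_def eq mself using MK Kpos by simp
        have "(2*K, 1) \<in> G" using c1G K2 by simp
        from mG[OF cG this] have "((c + 2*K) mod M, 1) \<in> G" using M1 by (simp add: mult)
        moreover have eq: "c + 2*K = K + M*1" unfolding c3 MK by simp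
        moreover have "(K + M*1) mod M = K" unfolding mself using MK Kpos by simp
        ultimately show ?thesis by simp
      qed
    qed
    have wG: "(K, 1 + 2*K) \<in> G"
      using mG[OF KG hG] MK Kpos D1 by (simp add: mult)
    have wZ: "(K, 1 + 2*K) \<in> Z"
    proof -
      have "(K, 1 + 2*K) \<otimes>\<^bsub>Hol e\<^esub> g = g \<otimes>\<^bsub>Hol e\<^esub> (K, 1 + 2*K)" if gG: "g \<in> G" for g
      proof -
        obtain u a where g: "g = (u,a)" by force
        have ug: "(u,a) \<in> G" using gG g by simp
        have "(K + u * (1 + 2*K)) mod M = (u + K * a) mod M"
        proof (cases "even u")
          case True
          then obtain l where l: "u = 2*l" by blast
          have "a mod 4 = 1" using B2[OF ug True] .
          then obtain i where i: "a = 4*i + 1" by (metis div_mult_mod_eq mult.commute)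
          have eq1: "K + u * (1 + 2*K) = (K + u) + M*l" unfolding l MK by (simp add: algebra_simps)
          have eq2: "u + K * a = (K + u) + M*i" unfolding i MK by (simp add: algebra_simps)
          show ?thesis unfolding eq1 eq2 mself ..
        next
          case False
          then obtain l where l: "u = 2*l+1" using oddE by blast
          have "a mod 4 = 3" using B1[OF ug False] .
          then obtain i where i: "a = 4*i + 3" by (metis div_mult_mod_eq mult.commute)
          have eq1: "K + u * (1 + 2*K) = (3*K + u) + M*l" unfolding l MK by (simp add: algebra_simps)
          have eq2: "u + K * a = (3*K + u) + M*i" unfolding i MK by (simp add: algebra_simps)
          show ?thesis unfolding eq1 eq2 mself ..
        qed
        thus ?thesis unfolding g by (simp add: mult mult.commute)
      qed
      thus ?thesis using wG unfolding Z_def by blast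
    qed
    have wo: "H.ord (K, 1 + 2*K) = 4"
    proof -
      have xc: "(K, 1 + 2*K) \<in> carrier (Hol e)" using Gcar wG by blast
      have gs4: "gs 4 x = 1 + x + x^2 + x^3" for x
        by (simp add: gs_def numeral_eq_Suc lessThan_Suc power2_eq_square power3_eq_cube)
      have gs2: "gs 2 x = 1 + x" for x by (simp add: gs_def numeral_eq_Suc lessThan_Suc)
      have "K * gs 4 (1 + 2*K) = M * (1 + 3*K + 4*K^2 + 2*K^3)"
        unfolding gs4 MK by (simp add: algebra_simps power2_eq_square power3_eq_cube)
      hence f1: "(K * gs 4 (1 + 2*K)) mod M = 0" by simp
      have eq4: "(1 + 2*K)^4 = 1 + M * (2*(1+K) + 4*K*(1+K)^2)"
        unfolding MK by (simp add: algebra_simps power2_eq_square power4_eq_xxxx)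
      have f2: "((1 + 2*K)^4) mod M = 1" unfolding eq4 mself using M1 by simp
      have x1: "(K, 1 + 2*K) [^]\<^bsub>Hol e\<^esub> ((2::nat)^2) = \<one>\<^bsub>Hol e\<^esub>"
        using f1 f2 by (simp add: powf one)
      obtain K' where K': "K = 2*K'" using Keven by blast
      have eq5: "K * gs 2 (1 + 2*K) = 2*K + M * K'" unfolding gs2 MK using K' by (simp add: algebra_simps power2_eq_square)
      have "(K * gs 2 (1 + 2*K)) mod M = 2*K" unfolding eq5 mself using MK Kpos by simp
      hence f3: "(K * gs 2 (1 + 2*K)) mod M \<noteq> 0" using Kpos by simp
      have x0: "(K, 1 + 2*K) [^]\<^bsub>Hol e\<^esub> ((2::nat)^(2-1)) \<noteq> \<one>\<^bsub>Hol e\<^esub>"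
        using f3 by (simp add: powf one)
      show ?thesis using H.ord_pow2[OF xc x1 x0] by simp
    qed
    show "(2^(e-2), 1 + 2^(e-1)) \<in> Z \<and> H.ord (2^(e-2), 1 + 2^(e-1)) = 4"
      using wZ wo K2 K_def by simp
  qed
  show ?thesis using c1Z ord2 cyc partB Zeq by simp
qed
end
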